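(* Let $P$ be a finite poset and let $P'$ be a poset with $P\subseteq P'\subseteq S_N(S_N(P))$ (as induced subposets). Then $N_{diag}(P')\subseteq N_{diag}(P)\cup A(P)$.
   Context: For a poset $P$, $x\prec y$ means $x<y$ with no $z$ satisfying $x<z<y$; $\mathrm{Diag}(P)$ is the set of covering pairs $(x,y)$, and $\mathrm{Inc}(P)$ the set of pairs of incomparable elements. Four elements $a,b,c,d$ form an $N$ in $P$ if $b\prec c$, $a\prec c$, $b\prec d$ and $(a,d)\in\mathrm{Inc}(P)$; $(b,c)$ is the diagonal edge of this $N$. $N_{diag}(P)$ is the set of diagonal edges of all $N$'s in $P$. $S_N(P)$ is the poset obtained from $P$ by adding one new (dummy) vertex $u$ on each edge $(b,c)\in N_{diag}(P)$ (so that $b\prec u\prec c$), with the induced order; thus $P\subseteq S_N(P)\subseteq S_N(S_N(P))$. $A(P)$ is the set of pairs $(b,c)\in\mathrm{Diag}(P)\setminus N_{diag}(P)$ for which there exist $a,d\in P$ with $a<c$, $b<d$, $(a,b),(c,d)\in\mathrm{Inc}(P)$, and either $(a,c)\in N_{diag}(P)$ or $(b,d)\in N_{diag}(P)$. *)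

theory Defs
  imports Main
begin

definition is_poset :: "'a set \<Rightarrow> ('a \<Rightarrow> 'a \<Rightarrow> bool) \<Rightarrow> bool" where
  "is_poset V le \<longleftrightarrow>
     (\<forall>x\<in>V. le x x) \<and>
     (\<forall>x\<in>V. \<forall>y\<in>V. le x y \<and> le y x \<longrightarrow> x = y) \<and>
     (\<forall>x\<in>V. \<forall>y\<in>V. \<forall>z\<in>V. le x y \<and> le y z \<longrightarrow> le x z)"

definition plt :: "'a set \<Rightarrow> ('a \<Rightarrow> 'a \<Rightarrow> bool) \<Rightarrow> 'a \<Rightarrow> 'a \<Rightarrow> bool" where
  "plt V le x y \<longleftrightarrow> x \<in> V \<and> y \<in> V \<and> le x y \<and> x \<noteq> y"

definition pcover :: "'a set \<Rightarrow> ('a \<Rightarrow> 'a \<Rightarrow> bool) \<Rightarrow> 'a \<Rightarrow> 'a \<Rightarrow> bool" where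
  "pcover V le x y \<longleftrightarrow> plt V le x y \<and> \<not> (\<exists>z\<in>V. plt V le x z \<and> plt V le z y)"

definition Diag :: "'a set \<Rightarrow> ('a \<Rightarrow> 'a \<Rightarrow> bool) \<Rightarrow> ('a \<times> 'a) set" where
  "Diag V le = {(x, y). pcover V le x y}"

definition Inc :: "'a set \<Rightarrow> ('a \<Rightarrow> 'a \<Rightarrow> bool) \<Rightarrow> ('a \<times> 'a) set" where
  "Inc V le = {(x, y). x \<in> V \<and> y \<in> V \<and> \<not> le x y \<and> \<not> le y x}"

definition Ndiag :: "'a set \<Rightarrow> ('a \<Rightarrow> 'a \<Rightarrow> bool) \<Rightarrow> ('a \<times> 'a) set" where
  "Ndiag V le = {(b, c). \<exists>a d. pcover V le b c \<and> pcover V le a c \<and> pcover V le b d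
                              \<and> (a, d) \<in> Inc V le}"

definition Aset :: "'a set \<Rightarrow> ('a \<Rightarrow> 'a \<Rightarrow> bool) \<Rightarrow> ('a \<times> 'a) set" where
  "Aset V le = {(b, c). (b, c) \<in> Diag V le - Ndiag V le \<and>
      (\<exists>a\<in>V. \<exists>d\<in>V. plt V le a c \<and> plt V le b d \<and> (a, b) \<in> Inc V le \<and> (c, d) \<in> Inc V le
         \<and> ((a, c) \<in> Ndiag V le \<or> (b, d) \<in> Ndiag V le))}"

text \<open>Vertices of S_N(P): old vertices, and a new dummy vertex New b c for each
  diagonal edge (b,c) of an N.\<close>
datatype 'a sn = Old 'a | New 'a 'a

definition SN_carrier :: "'a set \<Rightarrow> ('a \<Rightarrow> 'a \<Rightarrow> bool) \<Rightarrow> 'a sn set" where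
  "SN_carrier V le = Old ` V \<union> {New b c | b c. (b, c) \<in> Ndiag V le}"

text \<open>The order of S_N(P): the order generated by the order of P together with
  b < New b c < c, written out explicitly.\<close>
fun SN_le :: "('a \<Rightarrow> 'a \<Rightarrow> bool) \<Rightarrow> 'a sn \<Rightarrow> 'a sn \<Rightarrow> bool" where
  "SN_le le (Old x) (Old y) = le x y"
| "SN_le le (Old x) (New b c) = le x b"
| "SN_le le (New b c) (Old y) = le c y"
| "SN_le le (New b c) (New b' c') = ((b = b' \<and> c = c') \<or> le c b')"

end

theory Submission imports Defs begin

lemma Old_in_SN[simp]: "Old x \<in> SN_carrier V le \<longleftrightarrow> x \<in> V"
  by (auto simp: SN_carrier_def)
lemma New_in_SN[simp]: "New b c \<in> SN_carrier V le \<longleftrightarrow> (b, c) \<in> Ndiag V le"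
  by (auto simp: SN_carrier_def)

lemma Ndiag_D:
  assumes "(b, c) \<in> Ndiag V le"
  obtains a d where "pcover V le b c" "pcover V le a c" "pcover V le b d" "(a, d) \<in> Inc V le"
  using assms unfolding Ndiag_def by auto

lemma Ndiag_I:
  "pcover V le b c \<Longrightarrow> pcover V le a c \<Longrightarrow> pcover V le b d \<Longrightarrow> (a, d) \<in> Inc V le
   \<Longrightarrow> (b, c) \<in> Ndiag V le"
  unfolding Ndiag_def by auto

lemma pcover_in: "pcover V le x y \<Longrightarrow> x \<in> V \<and> y \<in> V \<and> le x y \<and> x \<noteq> y"
  by (auto simp: pcover_def plt_def)

lemma Ndiag_in: "(b, c) \<in> Ndiag V le \<Longrightarrow> b \<in> V \<and> c \<in> V \<and> le b c \<and> b \<noteq> c \<and> pcover V le b c"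
  by (auto elim!: Ndiag_D dest: pcover_in)

lemma top_unique:
  assumes "y \<in> V" "plt V le x y" "\<forall>z\<in>V. plt V le x z \<longrightarrow> le y z" "pcover V le x Y"
  shows "Y = y"
  using assms unfolding pcover_def plt_def by blast

lemma bot_unique:
  assumes "y \<in> V" "plt V le y x" "\<forall>z\<in>V. plt V le z x \<longrightarrow> le z y" "pcover V le X x"
  shows "X = y"
  using assms unfolding pcover_def plt_def by blast

lemma uniq_upper:
  assumes "y \<in> V" "plt V le x y" "\<forall>z\<in>V. plt V le x z \<longrightarrow> le y z"
  shows "(x, Y) \<notin> Ndiag V le"
proof
  assume "(x, Y) \<in> Ndiag V le"
  then obtain a d where h: "pcover V le x Y" "pcover V le a Y" "pcover V le x d" "(a, d) \<in> Inc V le"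
    by (rule Ndiag_D)
  have "Y = y" using top_unique[OF assms h(1)] .
  moreover have "d = y" using top_unique[OF assms h(3)] .
  ultimately show False using h(2,4) by (auto simp: Inc_def pcover_def plt_def)
qed

lemma uniq_lower:
  assumes "y \<in> V" "plt V le y x" "\<forall>z\<in>V. plt V le z x \<longrightarrow> le z y"
  shows "(X, x) \<notin> Ndiag V le"
proof
  assume "(X, x) \<in> Ndiag V le"
  then obtain a d where h: "pcover V le X x" "pcover V le a x" "pcover V le X d" "(a, d) \<in> Inc V le"
    by (rule Ndiag_D)
  have "X = y" using bot_unique[OF assms h(1)] .
  moreover have "a = y" using bot_unique[OF assms h(2)] .
  ultimately show False using h(3,4) by (auto simp: Inc_def pcover_def plt_def)
qed

lemma NU:
  assumes "le c c"
  shows "SN_le le (New b c) (Old c) \<and> (\<forall>z. z \<noteq> New b c \<longrightarrow> SN_le le (New b c) z \<longrightarrow> SN_le le (Old c) z)"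
proof -
  have "SN_le le (New b c) z \<longrightarrow> SN_le le (Old c) z" if "z \<noteq> New b c" for z
    using that by (cases z) auto
  then show ?thesis using assms by simp
qed

lemma NL:
  assumes "le b b"
  shows "SN_le le (Old b) (New b c) \<and> (\<forall>z. z \<noteq> New b c \<longrightarrow> SN_le le z (New b c) \<longrightarrow> SN_le le z (Old b))"
proof -
  have "SN_le le z (New b c) \<longrightarrow> SN_le le z (Old b)" if "z \<noteq> New b c" for z
    using that by (cases z) auto
  then show ?thesis using assms by simp
qed

lemma poset_refl: "is_poset V le \<Longrightarrow> x \<in> V \<Longrightarrow> le x x"
  unfolding is_poset_def by (elim conjE) (erule bspec)
lemma poset_antisym:
  assumes "is_poset V le" "x \<in> V" "y \<in> V" "le x y" "le y x" shows "x = y"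
proof -
  have "\<forall>x\<in>V. \<forall>y\<in>V. le x y \<and> le y x \<longrightarrow> x = y" using assms(1) unfolding is_poset_def by (elim conjE)
  then show ?thesis using assms(2-) by blast
qed
lemma poset_trans:
  assumes "is_poset V le" "x \<in> V" "y \<in> V" "z \<in> V" "le x y" "le y z" shows "le x z"
proof -
  have "\<forall>x\<in>V. \<forall>y\<in>V. \<forall>z\<in>V. le x y \<and> le y z \<longrightarrow> le x z" using assms(1) unfolding is_poset_def by (elim conjE)
  then show ?thesis using assms(2-) by blast
qed

lemma SN_refl: "(\<forall>x\<in>V. le x x) \<Longrightarrow> \<forall>x\<in>SN_carrier V le. SN_le le x x"
proof
  fix x assume "\<forall>x\<in>V. le x x" "x \<in> SN_carrier V le"
  then show "SN_le le x x" by (cases x) simp_all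
qed

lemma SN_Ndiag_Old:
  assumes refl: "\<forall>x\<in>V. le x x" and h: "(X, Y) \<in> Ndiag (SN_carrier V le) (SN_le le)"
  shows "\<exists>x y. X = Old x \<and> Y = Old y \<and> x \<in> V \<and> y \<in> V"
proof -
  let ?C = "SN_carrier V le"
  have XY: "X \<in> ?C" "Y \<in> ?C" using Ndiag_in[OF h] by auto
  have X: "\<exists>x. X = Old x"
  proof (cases X)
    case (New b c)
    with XY have bc: "(b, c) \<in> Ndiag V le" by simp
    then have c: "c \<in> V" "b \<noteq> c" using Ndiag_in[OF bc] by auto
    have lc: "le c c" using refl c by auto
    have "(New b c, Y) \<notin> Ndiag ?C (SN_le le)"
    proof (rule uniq_upper[where y = "Old c"])
      show "Old c \<in> ?C" using c by simp
      show "plt ?C (SN_le le) (New b c) (Old c)" using lc c bc by (simp add: plt_def)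
      show "\<forall>z\<in>?C. plt ?C (SN_le le) (New b c) z \<longrightarrow> SN_le le (Old c) z"
      proof (intro ballI impI)
        fix z assume "plt ?C (SN_le le) (New b c) z"
        then have "z \<noteq> New b c" "SN_le le (New b c) z" unfolding plt_def by auto
        then show "SN_le le (Old c) z" using NU[of le c b, OF lc] by blast
      qed
    qed
    with h New show ?thesis by simp
  qed (rule exI)
  have Y: "\<exists>y. Y = Old y"
  proof (cases Y)
    case (New b c)
    with XY have bc: "(b, c) \<in> Ndiag V le" by simp
    then have c: "b \<in> V" "b \<noteq> c" using Ndiag_in[OF bc] by auto
    have lc: "le b b" using refl c by auto
    have "(X, New b c) \<notin> Ndiag ?C (SN_le le)"
    proof (rule uniq_lower[where y = "Old b"])
      show "Old b \<in> ?C" using c by simp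
      show "plt ?C (SN_le le) (Old b) (New b c)" using lc c bc by (simp add: plt_def)
      show "\<forall>z\<in>?C. plt ?C (SN_le le) z (New b c) \<longrightarrow> SN_le le z (Old b)"
      proof (intro ballI impI)
        fix z assume "plt ?C (SN_le le) z (New b c)"
        then have "z \<noteq> New b c" "SN_le le z (New b c)" unfolding plt_def by auto
        then show "SN_le le z (Old b)" using NL[of le b c, OF lc] by blast
      qed
    qed
    with h New show ?thesis by simp
  qed (rule exI)
  from X Y obtain x y where "X = Old x" "Y = Old y" by blast
  with XY show ?thesis by simp
qed

lemma cover_above:
  assumes fin: "finite V" and P: "is_poset V le"
  shows "plt V le x z \<Longrightarrow> \<exists>y. pcover V le x y \<and> le y z"
proof (induction "card {w\<in>V. plt V le x w \<and> le w z}" arbitrary: z rule: less_induct)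
  case less
  have zV: "z \<in> V" using less.prems unfolding plt_def by blast
  have lzz: "le z z" using poset_refl[OF P zV] .
  show ?case
  proof (cases "pcover V le x z")
    case True
    with lzz show ?thesis by blast
  next
    case False
    then obtain w where w: "w \<in> V" "plt V le x w" "plt V le w z"
      using less.prems unfolding pcover_def by blast
    have wz: "le w z" "w \<noteq> z" using w(3) unfolding plt_def by auto
    have sub: "{u\<in>V. plt V le x u \<and> le u w} \<subset> {u\<in>V. plt V le x u \<and> le u z}"
    proof
      show "{u\<in>V. plt V le x u \<and> le u w} \<subseteq> {u\<in>V. plt V le x u \<and> le u z}"
      proof
        fix u assume "u \<in> {u\<in>V. plt V le x u \<and> le u w}"
        then have u: "u \<in> V" "plt V le x u" "le u w" by auto
        have "le u z" using poset_trans[OF P u(1) w(1) zV u(3) wz(1)] .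
        with u show "u \<in> {u\<in>V. plt V le x u \<and> le u z}" by simp
      qed
      have "z \<in> {u\<in>V. plt V le x u \<and> le u z}" using zV less.prems lzz by simp
      moreover have "z \<notin> {u\<in>V. plt V le x u \<and> le u w}"
      proof
        assume "z \<in> {u\<in>V. plt V le x u \<and> le u w}"
        then have "le z w" by simp
        with poset_antisym[OF P w(1) zV wz(1)] wz(2) show False by simp
      qed
      ultimately show "{u\<in>V. plt V le x u \<and> le u w} \<noteq> {u\<in>V. plt V le x u \<and> le u z}"
        by blast
    qed
    have "card {u\<in>V. plt V le x u \<and> le u w} < card {u\<in>V. plt V le x u \<and> le u z}"
      using psubset_card_mono[OF _ sub] fin by simp
    from less.hyps[OF this w(2)] obtain y where y: "pcover V le x y" "le y w" by blast
    have "y \<in> V" using y(1) unfolding pcover_def plt_def by blast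
    then have "le y z" using poset_trans[OF P _ w(1) zV y(2) wz(1)] by blast
    with y show ?thesis by blast
  qed
qed

lemma cover_below:
  assumes fin: "finite V" and P: "is_poset V le"
  shows "plt V le z x \<Longrightarrow> \<exists>y. pcover V le y x \<and> le z y"
proof (induction "card {w\<in>V. plt V le w x \<and> le z w}" arbitrary: z rule: less_induct)
  case less
  have zV: "z \<in> V" using less.prems unfolding plt_def by blast
  have lzz: "le z z" using poset_refl[OF P zV] .
  show ?case
  proof (cases "pcover V le z x")
    case True
    with lzz show ?thesis by blast
  next
    case False
    then obtain w where w: "w \<in> V" "plt V le w x" "plt V le z w"
      using less.prems unfolding pcover_def by blast
    have wz: "le z w" "z \<noteq> w" using w(3) unfolding plt_def by auto
    have sub: "{u\<in>V. plt V le u x \<and> le w u} \<subset> {u\<in>V. plt V le u x \<and> le z u}"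
    proof
      show "{u\<in>V. plt V le u x \<and> le w u} \<subseteq> {u\<in>V. plt V le u x \<and> le z u}"
      proof
        fix u assume "u \<in> {u\<in>V. plt V le u x \<and> le w u}"
        then have u: "u \<in> V" "plt V le u x" "le w u" by auto
        have "le z u" using poset_trans[OF P zV w(1) u(1) wz(1) u(3)] .
        with u show "u \<in> {u\<in>V. plt V le u x \<and> le z u}" by simp
      qed
      have "z \<in> {u\<in>V. plt V le u x \<and> le z u}" using zV less.prems lzz by simp
      moreover have "z \<notin> {u\<in>V. plt V le u x \<and> le w u}"
      proof
        assume "z \<in> {u\<in>V. plt V le u x \<and> le w u}"
        then have "le w z" by simp
        with poset_antisym[OF P zV w(1) wz(1)] wz(2) show False by simp
      qed
      ultimately show "{u\<in>V. plt V le u x \<and> le w u} \<noteq> {u\<in>V. plt V le u x \<and> le z u}"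
        by blast
    qed
    have "card {u\<in>V. plt V le u x \<and> le w u} < card {u\<in>V. plt V le u x \<and> le z u}"
      using psubset_card_mono[OF _ sub] fin by simp
    from less.hyps[OF this w(2)] obtain y where y: "pcover V le y x" "le w y" by blast
    have "y \<in> V" using y(1) unfolding pcover_def plt_def by blast
    then have "le z y" using poset_trans[OF P zV w(1) _ wz(1) y(2)] by blast
    with y show ?thesis by blast
  qed
qed


lemma pc_nb: "pcover V le x y \<Longrightarrow> plt V le x z \<Longrightarrow> plt V le z y \<Longrightarrow> False"
  unfolding pcover_def plt_def by blast

lemma pltI: "x \<in> V \<Longrightarrow> y \<in> V \<Longrightarrow> le x y \<Longrightarrow> x \<noteq> y \<Longrightarrow> plt V le x y"
  unfolding plt_def by blast

lemma IncD: "(x, y) \<in> Inc V le \<Longrightarrow> x \<in> V \<and> y \<in> V \<and> \<not> le x y \<and> \<not> le y x"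
  unfolding Inc_def by blast

lemma IncI: "x \<in> V \<Longrightarrow> y \<in> V \<Longrightarrow> \<not> le x y \<Longrightarrow> \<not> le y x \<Longrightarrow> (x, y) \<in> Inc V le"
  unfolding Inc_def by blast

lemma two_lower_inc:
  assumes "pcover V le a c" "pcover V le b c" "a \<noteq> b"
  shows "(a, b) \<in> Inc V le"
proof -
  have a: "a \<in> V" "le a c" "a \<noteq> c" and b: "b \<in> V" "le b c" "b \<noteq> c"
    using pcover_in[OF assms(1)] pcover_in[OF assms(2)] by auto
  have "\<not> le a b"
  proof
    assume "le a b"
    then have "plt V le a b" using pltI a b assms(3) by metis
    moreover have "plt V le b c" using pltI b pcover_in[OF assms(2)] by metis
    ultimately show False using pc_nb[OF assms(1)] by blast
  qed
  moreover have "\<not> le b a"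
  proof
    assume "le b a"
    then have "plt V le b a" using pltI a b assms(3) by metis
    moreover have "plt V le a c" using pltI a pcover_in[OF assms(1)] by metis
    ultimately show False using pc_nb[OF assms(2)] by blast
  qed
  ultimately show ?thesis using IncI a b by metis
qed

lemma two_upper_inc:
  assumes "pcover V le b c" "pcover V le b d" "c \<noteq> d"
  shows "(c, d) \<in> Inc V le"
proof -
  have c: "c \<in> V" "le b c" "b \<noteq> c" and d: "d \<in> V" "le b d" "b \<noteq> d" and bV: "b \<in> V"
    using pcover_in[OF assms(1)] pcover_in[OF assms(2)] by auto
  have "\<not> le c d"
  proof
    assume "le c d"
    then have "plt V le c d" using pltI c d assms(3) by metis
    moreover have "plt V le b c" using pltI c bV by metis
    ultimately show False using pc_nb[OF assms(2)] by blast
  qed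
  moreover have "\<not> le d c"
  proof
    assume "le d c"
    then have "plt V le d c" using pltI c d assms(3) by metis
    moreover have "plt V le b d" using pltI d bV by metis
    ultimately show False using pc_nb[OF assms(1)] by blast
  qed
  ultimately show ?thesis using IncI c d by metis
qed

lemma key_L:
  assumes fin: "finite V" and P: "is_poset V le"
    and ac: "pcover V le a c" and af: "pcover V le a f" and afN: "(a, f) \<in> Ndiag V le"
    and acN: "(a, c) \<notin> Ndiag V le" and bc: "pcover V le b c" and ab: "(a, b) \<in> Inc V le"
    and bcN: "(b, c) \<notin> Ndiag V le"
  shows "(b, f) \<in> Ndiag V le \<and> plt V le b f \<and> (c, f) \<in> Inc V le"
proof -
  have aV: "a \<in> V" and cV: "c \<in> V" and fV: "f \<in> V" and bV: "b \<in> V"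
    using pcover_in[OF ac] pcover_in[OF af] pcover_in[OF bc] by auto
  have lac: "le a c" "a \<noteq> c" and laf: "le a f" "a \<noteq> f" and lbc: "le b c" "b \<noteq> c"
    using pcover_in[OF ac] pcover_in[OF af] pcover_in[OF bc] by auto
  have nab: "\<not> le a b" "\<not> le b a" using IncD[OF ab] by auto
  have "(b, f) \<notin> Inc V le"
  proof
    assume "(b, f) \<in> Inc V le"
    then have "(a, c) \<in> Ndiag V le" using Ndiag_I[OF ac bc af] by blast
    with acN show False by simp
  qed
  then have "le b f \<or> le f b" using IncI[OF bV fV] by blast
  moreover have "\<not> le f b"
  proof
    assume "le f b"
    then have "le a b" using poset_trans[OF P aV fV bV laf(1)] by blast
    with nab show False by simp
  qed
  ultimately have lbf: "le b f" by blast
  have bf: "b \<noteq> f" using laf(1) nab by blast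
  have pbf: "plt V le b f" using pltI[where V=V and le=le, OF bV fV lbf bf] .
  have cbf: "pcover V le b f"
  proof (rule ccontr)
    assume "\<not> pcover V le b f"
    then obtain z where z: "z \<in> V" "plt V le b z" "plt V le z f"
      using pbf unfolding pcover_def by blast
    obtain z' where z': "pcover V le b z'" "le z' z" using cover_above[OF fin P z(2)] by blast
    have z'V: "z' \<in> V" and lbz': "le b z'" "b \<noteq> z'" using pcover_in[OF z'(1)] by auto
    have "(a, z') \<notin> Inc V le"
    proof
      assume "(a, z') \<in> Inc V le"
      then have "(b, c) \<in> Ndiag V le" using Ndiag_I[OF bc ac z'(1)] by blast
      with bcN show False by simp
    qed
    then have "le a z' \<or> le z' a" using IncI[OF aV z'V] by blast
    moreover have "\<not> le z' a"
    proof
      assume "le z' a"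
      then have "le b a" using poset_trans[OF P bV z'V aV lbz'(1)] by blast
      with nab show False by simp
    qed
    moreover have "\<not> le a z'"
    proof
      assume laz: "le a z'"
      have az: "a \<noteq> z'" using lbz'(1) nab by blast
      have lzf: "le z f" "z \<noteq> f" using z(3) unfolding plt_def by auto
      have lz'f: "le z' f" using poset_trans[OF P z'V z(1) fV z'(2) lzf(1)] .
      have "z' \<noteq> f"
      proof
        assume "z' = f"
        then have "le f z" using z'(2) by simp
        with poset_antisym[OF P z(1) fV lzf(1)] lzf(2) show False by simp
      qed
      then have "plt V le z' f" using pltI[where V=V and le=le, OF z'V fV lz'f] by blast
      moreover have "plt V le a z'" using pltI[where V=V and le=le, OF aV z'V laz az] .
      ultimately show False using pc_nb[OF af] by blast
    qed
    ultimately show False by blast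
  qed
  have cf: "c \<noteq> f" using acN afN by blast
  have incf: "(c, f) \<in> Inc V le"
  proof (rule IncI[OF cV fV])
    show "\<not> le c f"
    proof
      assume "le c f"
      then have "plt V le c f" using pltI[where V=V and le=le, OF cV fV _ cf] by blast
      moreover have "plt V le a c" using pltI[where V=V and le=le, OF aV cV lac] .
      ultimately show False using pc_nb[OF af] by blast
    qed
    show "\<not> le f c"
    proof
      assume "le f c"
      then have "plt V le f c" using pltI[where V=V and le=le, OF fV cV] cf by metis
      moreover have "plt V le b f" using pbf .
      ultimately show False using pc_nb[OF bc] by blast
    qed
  qed
  obtain g h where gh: "pcover V le g f" "pcover V le a h" "(g, h) \<in> Inc V le"
    using afN by (rule Ndiag_D)
  have gV: "g \<in> V" and hV: "h \<in> V" and lgf: "le g f" "g \<noteq> f"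
    using pcover_in[OF gh(1)] pcover_in[OF gh(2)] by auto
  have nfc: "\<not> le f c" "\<not> le c f" using IncD[OF incf] by auto
  have "(b, f) \<in> Ndiag V le"
  proof (cases "(g, c) \<in> Inc V le")
    case True
    show ?thesis using Ndiag_I[OF cbf gh(1) bc True] .
  next
    case False
    then have "le g c \<or> le c g" using IncI[OF gV cV] by blast
    moreover have "\<not> le c g"
    proof
      assume "le c g"
      then have "le c f" using poset_trans[OF P cV gV fV _ lgf(1)] by blast
      with nfc show False by simp
    qed
    ultimately have lgc: "le g c" by blast
    have gc: "g \<noteq> c" using lgf(1) nfc by blast
    obtain g' where g': "pcover V le g' c" "le g g'"
      using cover_below[OF fin P pltI[where V=V and le=le, OF gV cV lgc gc]] by blast
    have g'V: "g' \<in> V" and lg'c: "le g' c" using pcover_in[OF g'(1)] by auto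
    have ni1: "(g', h) \<notin> Inc V le"
    proof
      assume "(g', h) \<in> Inc V le"
      then have "(a, c) \<in> Ndiag V le" using Ndiag_I[OF ac g'(1) gh(2)] by blast
      with acN show False by simp
    qed
    have ni2: "(g', f) \<notin> Inc V le"
    proof
      assume "(g', f) \<in> Inc V le"
      then have "(a, c) \<in> Ndiag V le" using Ndiag_I[OF ac g'(1) af] by blast
      with acN show False by simp
    qed
    have "\<not> le f g'"
    proof
      assume "le f g'"
      then have "le f c" using poset_trans[OF P fV g'V cV _ lg'c] by blast
      with nfc show False by simp
    qed
    then have lg'f: "le g' f" using ni2 IncI[OF g'V fV] by blast
    have g'f: "g' \<noteq> f" using lg'c nfc by blast
    have "g = g'"
    proof (rule ccontr)
      assume "g \<noteq> g'"
      then have "plt V le g g'" using pltI[where V=V and le=le, OF gV g'V g'(2)] by blast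
      moreover have "plt V le g' f" using pltI[where V=V and le=le, OF g'V fV lg'f g'f] .
      ultimately show False using pc_nb[OF gh(1)] by blast
    qed
    with ni1 gh(3) show ?thesis by simp
  qed
  with pbf incf show ?thesis by blast
qed


lemma key_L':
  assumes fin: "finite V" and P: "is_poset V le"
    and bd: "pcover V le b d" and ed: "pcover V le e d" and edN: "(e, d) \<in> Ndiag V le"
    and bdN: "(b, d) \<notin> Ndiag V le" and bc: "pcover V le b c" and cd: "(c, d) \<in> Inc V le"
    and bcN: "(b, c) \<notin> Ndiag V le"
  shows "(e, c) \<in> Ndiag V le \<and> plt V le e c \<and> (b, e) \<in> Inc V le"
proof -
  have bV: "b \<in> V" and cV: "c \<in> V" and dV: "d \<in> V" and eV: "e \<in> V"
    using pcover_in[OF bd] pcover_in[OF ed] pcover_in[OF bc] by auto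
  have led: "le e d" "e \<noteq> d" and lbd: "le b d" "b \<noteq> d" and lbc: "le b c" "b \<noteq> c"
    using pcover_in[OF bd] pcover_in[OF ed] pcover_in[OF bc] by auto
  have ncd: "\<not> le c d" "\<not> le d c" using IncD[OF cd] by auto
  have "(e, c) \<notin> Inc V le"
  proof
    assume "(e, c) \<in> Inc V le"
    then have "(b, d) \<in> Ndiag V le" using Ndiag_I[OF bd ed bc] by blast
    with bdN show False by simp
  qed
  then have "le e c \<or> le c e" using IncI[OF eV cV] by blast
  moreover have "\<not> le c e"
  proof
    assume "le c e"
    then have "le c d" using poset_trans[OF P cV eV dV _ led(1)] by blast
    with ncd show False by simp
  qed
  ultimately have lec: "le e c" by blast
  have ec: "e \<noteq> c" using led(1) ncd by blast
  have pec: "plt V le e c" using pltI[where V=V and le=le, OF eV cV lec ec] .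
  have cec: "pcover V le e c"
  proof (rule ccontr)
    assume "\<not> pcover V le e c"
    then obtain z where z: "z \<in> V" "plt V le e z" "plt V le z c"
      using pec unfolding pcover_def by blast
    obtain z' where z': "pcover V le z' c" "le z z'" using cover_below[OF fin P z(3)] by blast
    have z'V: "z' \<in> V" and lz'c: "le z' c" "z' \<noteq> c" using pcover_in[OF z'(1)] by auto
    have "(z', d) \<notin> Inc V le"
    proof
      assume "(z', d) \<in> Inc V le"
      then have "(b, c) \<in> Ndiag V le" using Ndiag_I[OF bc z'(1) bd] by blast
      with bcN show False by simp
    qed
    then have "le z' d \<or> le d z'" using IncI[OF z'V dV] by blast
    moreover have "\<not> le d z'"
    proof
      assume "le d z'"
      then have "le d c" using poset_trans[OF P dV z'V cV _ lz'c(1)] by blast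
      with ncd show False by simp
    qed
    moreover have "\<not> le z' d"
    proof
      assume lzd: "le z' d"
      have zd: "z' \<noteq> d" using lz'c(1) ncd by blast
      have lez: "le e z" "e \<noteq> z" using z(2) unfolding plt_def by auto
      have lez': "le e z'" using poset_trans[OF P eV z(1) z'V lez(1) z'(2)] .
      have "e \<noteq> z'"
      proof
        assume "e = z'"
        then have "le z e" using z'(2) by simp
        with poset_antisym[OF P eV z(1) lez(1)] lez(2) show False by simp
      qed
      then have "plt V le e z'" using pltI[where V=V and le=le, OF eV z'V lez'] by blast
      moreover have "plt V le z' d" using pltI[where V=V and le=le, OF z'V dV lzd zd] .
      ultimately show False using pc_nb[OF ed] by blast
    qed
    ultimately show False by blast
  qed
  have be: "b \<noteq> e" using bdN edN by blast
  have incbe: "(b, e) \<in> Inc V le"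
  proof (rule IncI[OF bV eV])
    show "\<not> le b e"
    proof
      assume "le b e"
      then have "plt V le b e" using pltI[where V=V and le=le, OF bV eV _ be] by blast
      moreover have "plt V le e d" using pltI[where V=V and le=le, OF eV dV led] .
      ultimately show False using pc_nb[OF bd] by blast
    qed
    show "\<not> le e b"
    proof
      assume "le e b"
      then have "plt V le e b" using pltI[where V=V and le=le, OF eV bV] be by metis
      moreover have "plt V le b c" using pltI[where V=V and le=le, OF bV cV lbc] .
      ultimately show False using pc_nb[OF cec] by blast
    qed
  qed
  obtain g h where gh: "pcover V le g d" "pcover V le e h" "(g, h) \<in> Inc V le"
    using edN by (rule Ndiag_D)
  have gV: "g \<in> V" and hV: "h \<in> V" and leh: "le e h" "e \<noteq> h"
    using pcover_in[OF gh(1)] pcover_in[OF gh(2)] by auto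
  have nbe: "\<not> le b e" "\<not> le e b" using IncD[OF incbe] by auto
  have "(e, c) \<in> Ndiag V le"
  proof (cases "(b, h) \<in> Inc V le")
    case True
    show ?thesis using Ndiag_I[OF cec bc gh(2) True] .
  next
    case False
    then have "le b h \<or> le h b" using IncI[OF bV hV] by blast
    moreover have "\<not> le h b"
    proof
      assume "le h b"
      then have "le e b" using poset_trans[OF P eV hV bV leh(1)] by blast
      with nbe show False by simp
    qed
    ultimately have lbh: "le b h" by blast
    have bh: "b \<noteq> h" using leh(1) nbe by blast
    obtain h' where h': "pcover V le b h'" "le h' h"
      using cover_above[OF fin P pltI[where V=V and le=le, OF bV hV lbh bh]] by blast
    have h'V: "h' \<in> V" and lbh': "le b h'" using pcover_in[OF h'(1)] by auto
    have ni1: "(g, h') \<notin> Inc V le"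
    proof
      assume "(g, h') \<in> Inc V le"
      then have "(b, d) \<in> Ndiag V le" using Ndiag_I[OF bd gh(1) h'(1)] by blast
      with bdN show False by simp
    qed
    have ni2: "(e, h') \<notin> Inc V le"
    proof
      assume "(e, h') \<in> Inc V le"
      then have "(b, d) \<in> Ndiag V le" using Ndiag_I[OF bd ed h'(1)] by blast
      with bdN show False by simp
    qed
    have "\<not> le h' e"
    proof
      assume "le h' e"
      then have "le b e" using poset_trans[OF P bV h'V eV lbh'] by blast
      with nbe show False by simp
    qed
    then have leh': "le e h'" using ni2 IncI[OF eV h'V] by blast
    have eh': "e \<noteq> h'" using lbh' nbe by blast
    have "h = h'"
    proof (rule ccontr)
      assume "h \<noteq> h'"
      then have "plt V le h' h" using pltI[where V=V and le=le, OF h'V hV h'(2)] by blast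
      moreover have "plt V le e h'" using pltI[where V=V and le=le, OF eV h'V leh' eh'] .
      ultimately show False using pc_nb[OF gh(2)] by blast
    qed
    with ni1 gh(3) show ?thesis by simp
  qed
  with pec incbe show ?thesis by blast
qed


lemma S1_up:
  assumes refl: "\<forall>x\<in>V. le x x" and bc: "(b, c) \<in> Ndiag V le"
  shows "plt (SN_carrier V le) (SN_le le) (New b c) (Old c) \<and>
         (\<forall>z\<in>SN_carrier V le. plt (SN_carrier V le) (SN_le le) (New b c) z \<longrightarrow> SN_le le (Old c) z)"
proof -
  have c: "c \<in> V" "b \<noteq> c" using Ndiag_in[OF bc] by auto
  have lc: "le c c" using refl c by auto
  have "plt (SN_carrier V le) (SN_le le) (New b c) (Old c)" using lc c bc by (simp add: plt_def)
  moreover have "\<forall>z\<in>SN_carrier V le. plt (SN_carrier V le) (SN_le le) (New b c) z \<longrightarrow> SN_le le (Old c) z"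
  proof (intro ballI impI)
    fix z assume "plt (SN_carrier V le) (SN_le le) (New b c) z"
    then have "z \<noteq> New b c" "SN_le le (New b c) z" unfolding plt_def by auto
    then show "SN_le le (Old c) z" using NU[of le c b, OF lc] by blast
  qed
  ultimately show ?thesis by blast
qed

lemma S1_lo:
  assumes refl: "\<forall>x\<in>V. le x x" and bc: "(b, c) \<in> Ndiag V le"
  shows "plt (SN_carrier V le) (SN_le le) (Old b) (New b c) \<and>
         (\<forall>z\<in>SN_carrier V le. plt (SN_carrier V le) (SN_le le) z (New b c) \<longrightarrow> SN_le le z (Old b))"
proof -
  have c: "b \<in> V" "b \<noteq> c" using Ndiag_in[OF bc] by auto
  have lc: "le b b" using refl c by auto
  have "plt (SN_carrier V le) (SN_le le) (Old b) (New b c)" using lc c bc by (simp add: plt_def)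
  moreover have "\<forall>z\<in>SN_carrier V le. plt (SN_carrier V le) (SN_le le) z (New b c) \<longrightarrow> SN_le le z (Old b)"
  proof (intro ballI impI)
    fix z assume "plt (SN_carrier V le) (SN_le le) z (New b c)"
    then have "z \<noteq> New b c" "SN_le le z (New b c)" unfolding plt_def by auto
    then show "SN_le le z (Old b)" using NL[of le b c, OF lc] by blast
  qed
  ultimately show ?thesis by blast
qed

lemma Old_cover:
  assumes sub: "Old ` V \<subseteq> C" and xV: "x \<in> V" and yV: "y \<in> V"
    and h: "pcover C (SN_le le) (Old x) (Old y)"
  shows "pcover V le x y"
proof -
  have p: "SN_le le (Old x) (Old y)" "Old x \<noteq> Old y" using pcover_in[OF h] by auto
  then have lxy: "le x y" "x \<noteq> y" by auto
  have "\<not> (\<exists>z\<in>V. plt V le x z \<and> plt V le z y)"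
  proof
    assume "\<exists>z\<in>V. plt V le x z \<and> plt V le z y"
    then obtain z where z: "z \<in> V" "plt V le x z" "plt V le z y" by blast
    have zC: "Old z \<in> C" "Old x \<in> C" "Old y \<in> C" using sub z(1) xV yV by auto
    have "le x z" "x \<noteq> z" "le z y" "z \<noteq> y" using z unfolding plt_def by auto
    then have "plt C (SN_le le) (Old x) (Old z)" "plt C (SN_le le) (Old z) (Old y)"
      using zC unfolding plt_def by auto
    then show False using pc_nb[OF h] by blast
  qed
  then show ?thesis unfolding pcover_def using pltI[where V=V and le=le, OF xV yV lxy] by blast
qed

lemma Old_Inc:
  assumes "(Old x, Old y) \<in> Inc C (SN_le le)" "x \<in> V" "y \<in> V"
  shows "(x, y) \<in> Inc V le"
proof -
  have "\<not> SN_le le (Old x) (Old y)" "\<not> SN_le le (Old y) (Old x)" using IncD[OF assms(1)] by auto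
  then have "\<not> le x y" "\<not> le y x" by auto
  then show ?thesis using IncI[OF assms(2,3)] by blast
qed

lemma aset_intro:
  assumes "pcover V le b c" "(b, c) \<notin> Ndiag V le" "x \<in> V" "y \<in> V" "plt V le x c" "plt V le b y"
    "(x, b) \<in> Inc V le" "(c, y) \<in> Inc V le" "(x, c) \<in> Ndiag V le \<or> (b, y) \<in> Ndiag V le"
  shows "(b, c) \<in> Aset V le"
proof -
  have "(b, c) \<in> Diag V le" using assms(1) unfolding Diag_def by simp
  then show ?thesis unfolding Aset_def using assms(2-) by blast
qed

lemma S2_forms:
  assumes refl: "\<forall>x\<in>V. le x x" and z: "z \<in> SN_carrier (SN_carrier V le) (SN_le le)"
  shows "(\<exists>x\<in>V. z = Old (Old x)) \<or> (\<exists>b c. z = Old (New b c) \<and> (b, c) \<in> Ndiag V le) \<or>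
         (\<exists>x y. z = New (Old x) (Old y) \<and> (Old x, Old y) \<in> Ndiag (SN_carrier V le) (SN_le le) \<and> x \<in> V \<and> y \<in> V)"
proof (cases z)
  case (Old Z)
  with z have "Z \<in> SN_carrier V le" by simp
  then show ?thesis using Old by (cases Z) auto
next
  case (New X Y)
  with z have h: "(X, Y) \<in> Ndiag (SN_carrier V le) (SN_le le)" by simp
  then obtain x y where "X = Old x" "Y = Old y" "x \<in> V" "y \<in> V" using SN_Ndiag_Old[OF refl h] by blast
  then show ?thesis using New h by blast
qed


lemma W_up1:
  assumes refl: "\<forall>x\<in>V. le x x" and Wsub: "W \<subseteq> SN_carrier (SN_carrier V le) (SN_le le)"
    and OOV: "(Old \<circ> Old) ` V \<subseteq> W" and bc: "(b, c) \<in> Ndiag V le" and u: "Old (New b c) \<in> W"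
  shows "Old (Old c) \<in> W \<and> plt W (SN_le (SN_le le)) (Old (New b c)) (Old (Old c)) \<and>
     (\<forall>z\<in>W. plt W (SN_le (SN_le le)) (Old (New b c)) z \<longrightarrow> SN_le (SN_le le) (Old (Old c)) z)"
proof -
  have c: "c \<in> V" using Ndiag_in[OF bc] by auto
  have cW: "Old (Old c) \<in> W" using OOV c by auto
  have lc: "le c c" using refl c by auto
  have p: "plt W (SN_le (SN_le le)) (Old (New b c)) (Old (Old c))"
    using cW u lc unfolding plt_def by simp
  have "SN_le (SN_le le) (Old (Old c)) z" if z: "z \<in> W" "plt W (SN_le (SN_le le)) (Old (New b c)) z" for z
  proof -
    have zz: "z \<noteq> Old (New b c)" "SN_le (SN_le le) (Old (New b c)) z" using z(2) unfolding plt_def by auto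
    have "z \<in> SN_carrier (SN_carrier V le) (SN_le le)" using z(1) Wsub by blast
    from S2_forms[OF refl this] show ?thesis
    proof (elim disjE exE conjE bexE)
      fix x assume "x \<in> V" "z = Old (Old x)" then show ?thesis using zz by simp
    next
      fix b' c' assume "z = Old (New b' c')" then show ?thesis using zz by auto
    next
      fix x y assume "z = New (Old x) (Old y)" then show ?thesis using zz by simp
    qed
  qed
  with cW p show ?thesis by blast
qed

lemma W_lo1:
  assumes refl: "\<forall>x\<in>V. le x x" and Wsub: "W \<subseteq> SN_carrier (SN_carrier V le) (SN_le le)"
    and OOV: "(Old \<circ> Old) ` V \<subseteq> W" and bc: "(b, c) \<in> Ndiag V le" and u: "Old (New b c) \<in> W"
  shows "Old (Old b) \<in> W \<and> plt W (SN_le (SN_le le)) (Old (Old b)) (Old (New b c)) \<and>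
     (\<forall>z\<in>W. plt W (SN_le (SN_le le)) z (Old (New b c)) \<longrightarrow> SN_le (SN_le le) z (Old (Old b)))"
proof -
  have c: "b \<in> V" using Ndiag_in[OF bc] by auto
  have cW: "Old (Old b) \<in> W" using OOV c by auto
  have lc: "le b b" using refl c by auto
  have p: "plt W (SN_le (SN_le le)) (Old (Old b)) (Old (New b c))"
    using cW u lc unfolding plt_def by simp
  have "SN_le (SN_le le) z (Old (Old b))" if z: "z \<in> W" "plt W (SN_le (SN_le le)) z (Old (New b c))" for z
  proof -
    have zz: "z \<noteq> Old (New b c)" "SN_le (SN_le le) z (Old (New b c))" using z(2) unfolding plt_def by auto
    have "z \<in> SN_carrier (SN_carrier V le) (SN_le le)" using z(1) Wsub by blast
    from S2_forms[OF refl this] show ?thesis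
    proof (elim disjE exE conjE bexE)
      fix x assume "x \<in> V" "z = Old (Old x)" then show ?thesis using zz by simp
    next
      fix b' c' assume "z = Old (New b' c')" then show ?thesis using zz by auto
    next
      fix x y assume "z = New (Old x) (Old y)" then show ?thesis using zz by simp
    qed
  qed
  with cW p show ?thesis by blast
qed

lemma W_up2:
  assumes refl: "\<forall>x\<in>V. le x x" and OOV: "(Old \<circ> Old) ` V \<subseteq> W"
    and y: "y \<in> V" and u: "New (Old x) (Old y) \<in> W"
  shows "Old (Old y) \<in> W \<and> plt W (SN_le (SN_le le)) (New (Old x) (Old y)) (Old (Old y)) \<and>
     (\<forall>z\<in>W. plt W (SN_le (SN_le le)) (New (Old x) (Old y)) z \<longrightarrow> SN_le (SN_le le) (Old (Old y)) z)"
proof -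
  have cW: "Old (Old y) \<in> W" using OOV y by auto
  have lc: "SN_le le (Old y) (Old y)" using refl y by auto
  have p: "plt W (SN_le (SN_le le)) (New (Old x) (Old y)) (Old (Old y))"
    using cW u lc unfolding plt_def by simp
  have "SN_le (SN_le le) (Old (Old y)) z" if z: "z \<in> W" "plt W (SN_le (SN_le le)) (New (Old x) (Old y)) z" for z
  proof -
    have zz: "z \<noteq> New (Old x) (Old y)" "SN_le (SN_le le) (New (Old x) (Old y)) z" using z(2) unfolding plt_def by auto
    then show ?thesis using NU[of "SN_le le" "Old y" "Old x", OF lc] by blast
  qed
  with cW p show ?thesis by blast
qed

lemma W_lo2:
  assumes refl: "\<forall>x\<in>V. le x x" and OOV: "(Old \<circ> Old) ` V \<subseteq> W"
    and x: "x \<in> V" and u: "New (Old x) (Old y) \<in> W"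
  shows "Old (Old x) \<in> W \<and> plt W (SN_le (SN_le le)) (Old (Old x)) (New (Old x) (Old y)) \<and>
     (\<forall>z\<in>W. plt W (SN_le (SN_le le)) z (New (Old x) (Old y)) \<longrightarrow> SN_le (SN_le le) z (Old (Old x)))"
proof -
  have cW: "Old (Old x) \<in> W" using OOV x by auto
  have lc: "SN_le le (Old x) (Old x)" using refl x by auto
  have p: "plt W (SN_le (SN_le le)) (Old (Old x)) (New (Old x) (Old y))"
    using cW u lc unfolding plt_def by simp
  have "SN_le (SN_le le) z (Old (Old x))" if z: "z \<in> W" "plt W (SN_le (SN_le le)) z (New (Old x) (Old y))" for z
  proof -
    have zz: "z \<noteq> New (Old x) (Old y)" "SN_le (SN_le le) z (New (Old x) (Old y))" using z(2) unfolding plt_def by auto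
    then show ?thesis using NL[of "SN_le le" "Old x" "Old y", OF lc] by blast
  qed
  with cW p show ?thesis by blast
qed


lemma OO_cover:
  assumes OOV: "(Old \<circ> Old) ` V \<subseteq> W" and xV: "x \<in> V" and yV: "y \<in> V"
    and h: "pcover W (SN_le (SN_le le)) (Old (Old x)) (Old (Old y))"
  shows "pcover V le x y"
proof -
  have s: "Old ` (Old ` V) \<subseteq> W" using OOV by (simp add: image_comp)
  have "pcover (Old ` V) (SN_le le) (Old x) (Old y)"
    using Old_cover[OF s _ _ h] xV yV by blast
  then show ?thesis using Old_cover[OF subset_refl xV yV] by blast
qed

lemma OO_Inc:
  assumes "(Old (Old x), Old (Old y)) \<in> Inc W (SN_le (SN_le le))" "x \<in> V" "y \<in> V"
  shows "(x, y) \<in> Inc V le"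
proof -
  have "\<not> SN_le (SN_le le) (Old (Old x)) (Old (Old y))" "\<not> SN_le (SN_le le) (Old (Old y)) (Old (Old x))"
    using IncD[OF assms(1)] by auto
  then have "\<not> le x y" "\<not> le y x" by auto
  then show ?thesis using IncI[OF assms(2,3)] by blast
qed

lemma Inc_sym: "(x, y) \<in> Inc V le \<Longrightarrow> (y, x) \<in> Inc V le"
  using IncD[of x y V le] IncI[of y V x le] by blast

theorem lemma5:
  fixes V :: "'a set" and le :: "'a \<Rightarrow> 'a \<Rightarrow> bool" and W :: "'a sn sn set"
  assumes "finite V"
    and "is_poset V le"
    and "(Old \<circ> Old) ` V \<subseteq> W"
    and "W \<subseteq> SN_carrier (SN_carrier V le) (SN_le le)"
  shows "Ndiag W (SN_le (SN_le le))
           \<subseteq> (\<lambda>(b, c). (Old (Old b), Old (Old c))) ` (Ndiag V le \<union> Aset V le)"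
proof
  note fin = assms(1) and P = assms(2) and OOV = assms(3) and Wsub = assms(4)
  let ?le2 = "SN_le (SN_le le)" and ?S1 = "SN_carrier V le" and ?le1 = "SN_le le"
  have refl: "\<forall>x\<in>V. le x x" using poset_refl[OF P] by blast
  have OldS1: "Old ` V \<subseteq> ?S1" by auto
  fix p assume "p \<in> Ndiag W ?le2"
  then obtain B C where pBC: "p = (B, C)" and BC: "(B, C) \<in> Ndiag W ?le2" by (cases p) auto
  obtain A D where h: "pcover W ?le2 B C" "pcover W ?le2 A C" "pcover W ?le2 B D" "(A, D) \<in> Inc W ?le2"
    using BC by (rule Ndiag_D)
  have BW: "B \<in> W" and CW: "C \<in> W" and AW: "A \<in> W" and DW: "D \<in> W"
    using pcover_in[OF h(1)] pcover_in[OF h(2)] pcover_in[OF h(3)] by auto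
  have S2: "z \<in> SN_carrier ?S1 ?le1" if "z \<in> W" for z using that Wsub by blast
  have "\<exists>b\<in>V. B = Old (Old b)"
    using S2_forms[where le=le, OF refl S2[OF BW]]
  proof (elim disjE exE conjE bexE)
    fix x assume "x \<in> V" "B = Old (Old x)" then show ?thesis by blast
  next
    fix b' c' assume e: "B = Old (New b' c')" "(b', c') \<in> Ndiag V le"
    have u: "Old (Old c') \<in> W \<and> plt W ?le2 (Old (New b' c')) (Old (Old c')) \<and>
       (\<forall>z\<in>W. plt W ?le2 (Old (New b' c')) z \<longrightarrow> ?le2 (Old (Old c')) z)"
      using W_up1[where le=le, OF refl Wsub OOV e(2)] BW e(1) by blast
    have "(B, C) \<notin> Ndiag W ?le2" unfolding e(1) using u uniq_upper by metis
    with BC show ?thesis by simp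
  next
    fix x y assume e: "B = New (Old x) (Old y)" "(Old x, Old y) \<in> Ndiag ?S1 ?le1" "x \<in> V" "y \<in> V"
    have u: "Old (Old y) \<in> W \<and> plt W ?le2 (New (Old x) (Old y)) (Old (Old y)) \<and>
       (\<forall>z\<in>W. plt W ?le2 (New (Old x) (Old y)) z \<longrightarrow> ?le2 (Old (Old y)) z)"
      using W_up2[where le=le, OF refl OOV e(4)] BW e(1) by blast
    have "(B, C) \<notin> Ndiag W ?le2" unfolding e(1) using u uniq_upper by metis
    with BC show ?thesis by simp
  qed
  then obtain b where b: "b \<in> V" "B = Old (Old b)" by blast
  have "\<exists>c\<in>V. C = Old (Old c)"
    using S2_forms[where le=le, OF refl S2[OF CW]]
  proof (elim disjE exE conjE bexE)
    fix x assume "x \<in> V" "C = Old (Old x)" then show ?thesis by blast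
  next
    fix b' c' assume e: "C = Old (New b' c')" "(b', c') \<in> Ndiag V le"
    have u: "Old (Old b') \<in> W \<and> plt W ?le2 (Old (Old b')) (Old (New b' c')) \<and>
       (\<forall>z\<in>W. plt W ?le2 z (Old (New b' c')) \<longrightarrow> ?le2 z (Old (Old b')))"
      using W_lo1[where le=le, OF refl Wsub OOV e(2)] CW e(1) by blast
    have "(B, C) \<notin> Ndiag W ?le2" unfolding e(1) using u uniq_lower by metis
    with BC show ?thesis by simp
  next
    fix x y assume e: "C = New (Old x) (Old y)" "(Old x, Old y) \<in> Ndiag ?S1 ?le1" "x \<in> V" "y \<in> V"
    have u: "Old (Old x) \<in> W \<and> plt W ?le2 (Old (Old x)) (New (Old x) (Old y)) \<and>
       (\<forall>z\<in>W. plt W ?le2 z (New (Old x) (Old y)) \<longrightarrow> ?le2 z (Old (Old x)))"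
      using W_lo2[where le=le, OF refl OOV e(3)] CW e(1) by blast
    have "(B, C) \<notin> Ndiag W ?le2" unfolding e(1) using u uniq_lower by metis
    with BC show ?thesis by simp
  qed
  then obtain c where c: "c \<in> V" "C = Old (Old c)" by blast
  have bc: "pcover V le b c" using OO_cover[OF OOV b(1) c(1)] h(1) b(2) c(2) by simp
  have "(b, c) \<in> Ndiag V le \<union> Aset V le"
  proof (cases "(b, c) \<in> Ndiag V le")
    case True then show ?thesis by simp
  next
    case bcN: False
    have "\<exists>a\<in>V. pcover V le a c \<and> a \<noteq> b \<and>
      (A = Old (Old a) \<or> (a, c) \<in> Ndiag V le \<or> (Old a, Old c) \<in> Ndiag ?S1 ?le1)"
      using S2_forms[where le=le, OF refl S2[OF AW]]
    proof (elim disjE exE conjE bexE)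
      fix x assume e: "x \<in> V" "A = Old (Old x)"
      have xc: "pcover V le x c" using OO_cover[OF OOV e(1) c(1)] h(2) e(2) c(2) by simp
      have "x \<noteq> b"
      proof
        assume "x = b"
        then have "A = B" using e b by simp
        then show False using IncD[OF h(4)] pcover_in[OF h(3)] by simp
      qed
      with xc e show ?thesis by blast
    next
      fix a c' assume e: "A = Old (New a c')" "(a, c') \<in> Ndiag V le"
      have u: "Old (Old c') \<in> W \<and> plt W ?le2 (Old (New a c')) (Old (Old c')) \<and>
         (\<forall>z\<in>W. plt W ?le2 (Old (New a c')) z \<longrightarrow> ?le2 (Old (Old c')) z)"
        using W_up1[where le=le, OF refl Wsub OOV e(2)] AW e(1) by blast
      have "C = Old (Old c')" using top_unique[of "Old (Old c')" W ?le2 "Old (New a c')" C] u h(2) e(1) by blast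
      then have "c' = c" using c(2) by simp
      then have ac: "(a, c) \<in> Ndiag V le" using e(2) by simp
      have "a \<noteq> b" using ac bcN by blast
      then show ?thesis using ac Ndiag_in[OF ac] by blast
    next
      fix x y assume e: "A = New (Old x) (Old y)" "(Old x, Old y) \<in> Ndiag ?S1 ?le1" "x \<in> V" "y \<in> V"
      have u: "Old (Old y) \<in> W \<and> plt W ?le2 (New (Old x) (Old y)) (Old (Old y)) \<and>
         (\<forall>z\<in>W. plt W ?le2 (New (Old x) (Old y)) z \<longrightarrow> ?le2 (Old (Old y)) z)"
        using W_up2[where le=le, OF refl OOV e(4)] AW e(1) by blast
      have "C = Old (Old y)" using top_unique[of "Old (Old y)" W ?le2 "New (Old x) (Old y)" C] u h(2) e(1) by blast
      then have yc: "y = c" using c(2) by simp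
      have xc: "pcover V le x c"
        using Old_cover[OF OldS1 e(3) e(4)] Ndiag_in[OF e(2)] yc by blast
      have "x \<noteq> b"
      proof
        assume xb: "x = b"
        have "plt W ?le2 B A" using BW AW b(2) e(1) xb refl b(1) unfolding plt_def by simp
        moreover have "plt W ?le2 A C" using CW AW c(2) e(1) yc refl c(1) unfolding plt_def by simp
        ultimately show False using pc_nb[OF h(1)] by blast
      qed
      then show ?thesis using xc e(2,3) yc by blast
    qed
    then obtain a where a: "a \<in> V" "pcover V le a c" "a \<noteq> b"
      "A = Old (Old a) \<or> (a, c) \<in> Ndiag V le \<or> (Old a, Old c) \<in> Ndiag ?S1 ?le1" by blast
    have "\<exists>d\<in>V. pcover V le b d \<and> d \<noteq> c \<and>
      (D = Old (Old d) \<or> (b, d) \<in> Ndiag V le \<or> (Old b, Old d) \<in> Ndiag ?S1 ?le1)"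
      using S2_forms[where le=le, OF refl S2[OF DW]]
    proof (elim disjE exE conjE bexE)
      fix x assume e: "x \<in> V" "D = Old (Old x)"
      have xc: "pcover V le b x" using OO_cover[OF OOV b(1) e(1)] h(3) e(2) b(2) by simp
      have "x \<noteq> c"
      proof
        assume "x = c"
        then have "D = C" using e c by simp
        then show False using IncD[OF h(4)] pcover_in[OF h(2)] by simp
      qed
      with xc e show ?thesis by blast
    next
      fix b' d assume e: "D = Old (New b' d)" "(b', d) \<in> Ndiag V le"
      have u: "Old (Old b') \<in> W \<and> plt W ?le2 (Old (Old b')) (Old (New b' d)) \<and>
         (\<forall>z\<in>W. plt W ?le2 z (Old (New b' d)) \<longrightarrow> ?le2 z (Old (Old b')))"
        using W_lo1[where le=le, OF refl Wsub OOV e(2)] DW e(1) by blast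
      have "B = Old (Old b')" using bot_unique[of "Old (Old b')" W ?le2 "Old (New b' d)" B] u h(3) e(1) by blast
      then have "b' = b" using b(2) by simp
      then have bd: "(b, d) \<in> Ndiag V le" using e(2) by simp
      have "d \<noteq> c" using bd bcN by blast
      then show ?thesis using bd Ndiag_in[OF bd] by blast
    next
      fix x y assume e: "D = New (Old x) (Old y)" "(Old x, Old y) \<in> Ndiag ?S1 ?le1" "x \<in> V" "y \<in> V"
      have u: "Old (Old x) \<in> W \<and> plt W ?le2 (Old (Old x)) (New (Old x) (Old y)) \<and>
         (\<forall>z\<in>W. plt W ?le2 z (New (Old x) (Old y)) \<longrightarrow> ?le2 z (Old (Old x)))"
        using W_lo2[where le=le, OF refl OOV e(3)] DW e(1) by blast
      have "B = Old (Old x)" using bot_unique[of "Old (Old x)" W ?le2 "New (Old x) (Old y)" B] u h(3) e(1) by blast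
      then have xb: "x = b" using b(2) by simp
      have xc: "pcover V le b y"
        using Old_cover[OF OldS1 e(3) e(4)] Ndiag_in[OF e(2)] xb by blast
      have "y \<noteq> c"
      proof
        assume yc: "y = c"
        have "plt W ?le2 B D" using BW DW b(2) e(1) xb refl b(1) unfolding plt_def by simp
        moreover have "plt W ?le2 D C" using CW DW c(2) e(1) yc refl c(1) unfolding plt_def by simp
        ultimately show False using pc_nb[OF h(1)] by blast
      qed
      then show ?thesis using xc e(2,4) xb by blast
    qed
    then obtain d where d: "d \<in> V" "pcover V le b d" "d \<noteq> c"
      "D = Old (Old d) \<or> (b, d) \<in> Ndiag V le \<or> (Old b, Old d) \<in> Ndiag ?S1 ?le1" by blast
    have ab: "(a, b) \<in> Inc V le" using two_lower_inc[OF a(2) bc a(3)] .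
    have cd: "(c, d) \<in> Inc V le" using two_upper_inc[OF bc d(2) d(3)[symmetric]] .
    have pac: "plt V le a c" and pbd: "plt V le b d" using a(2) d(2) unfolding pcover_def by auto
    show ?thesis
    proof (cases "(a, c) \<in> Ndiag V le \<or> (b, d) \<in> Ndiag V le")
      case True
      then show ?thesis using aset_intro[OF bc bcN a(1) d(1) pac pbd ab cd] by blast
    next
      case False
      then have acN: "(a, c) \<notin> Ndiag V le" and bdN: "(b, d) \<notin> Ndiag V le" by auto
      have "(A = Old (Old a) \<and> D = Old (Old d)) \<or> (Old a, Old c) \<in> Ndiag ?S1 ?le1 \<or> (Old b, Old d) \<in> Ndiag ?S1 ?le1"
        using a(4) d(4) acN bdN by blast
      then show ?thesis
      proof (elim disjE conjE)
        assume eA: "A = Old (Old a)" and eD: "D = Old (Old d)"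
        have "(a, d) \<in> Inc V le" using OO_Inc[of a d W le V] h(4) eA eD a(1) d(1) by simp
        then have "(b, c) \<in> Ndiag V le" using Ndiag_I[OF bc a(2) d(2)] by blast
        with bcN show ?thesis by simp
      next
        assume N1: "(Old a, Old c) \<in> Ndiag ?S1 ?le1"
        obtain A' D' where h': "pcover ?S1 ?le1 A' (Old c)" "pcover ?S1 ?le1 (Old a) D'" "(A', D') \<in> Inc ?S1 ?le1"
          using N1 by (rule Ndiag_D)
        have A'S: "A' \<in> ?S1" and D'S: "D' \<in> ?S1" using pcover_in[OF h'(1)] pcover_in[OF h'(2)] by auto
        show ?thesis
        proof (cases A')
          case (New e c')
          have ec': "(e, c') \<in> Ndiag V le" using A'S New by simp
          have u: "plt ?S1 ?le1 (New e c') (Old c') \<and> (\<forall>z\<in>?S1. plt ?S1 ?le1 (New e c') z \<longrightarrow> ?le1 (Old c') z)"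
            using S1_up[OF refl ec'] .
          have c'S: "Old c' \<in> ?S1" using Ndiag_in[OF ec'] by simp
          have "Old c = Old c'" using top_unique[OF c'S] u h'(1) New by blast
          then have ec: "(e, c) \<in> Ndiag V le" using ec' by simp
          have eb: "e \<noteq> b" using ec bcN by blast
          have ecp: "pcover V le e c" using Ndiag_in[OF ec] by blast
          have "(e, b) \<in> Inc V le" using two_lower_inc[OF ecp bc eb] .
          moreover have "plt V le e c" "e \<in> V" using ecp unfolding pcover_def plt_def by auto
          ultimately show ?thesis using aset_intro[OF bc bcN _ d(1) _ pbd _ cd] ec by blast
        next
          case (Old e)
          have eV: "e \<in> V" using A'S Old by simp
          have ec: "pcover V le e c" using Old_cover[OF OldS1 eV c(1)] h'(1) Old by simp
          show ?thesis
          proof (cases D')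
            case (New a' f)
            have af': "(a', f) \<in> Ndiag V le" using D'S New by simp
            have u: "plt ?S1 ?le1 (Old a') (New a' f) \<and> (\<forall>z\<in>?S1. plt ?S1 ?le1 z (New a' f) \<longrightarrow> ?le1 z (Old a'))"
              using S1_lo[OF refl af'] .
            have a'S: "Old a' \<in> ?S1" using Ndiag_in[OF af'] by simp
            have "Old a = Old a'" using bot_unique[OF a'S] u h'(2) New by blast
            then have af: "(a, f) \<in> Ndiag V le" using af' by simp
            have afp: "pcover V le a f" using Ndiag_in[OF af] by blast
            have fV: "f \<in> V" using Ndiag_in[OF af] by blast
            have k: "(b, f) \<in> Ndiag V le \<and> plt V le b f \<and> (c, f) \<in> Inc V le"
              using key_L[OF fin P a(2) afp af acN bc ab bcN] .
            then show ?thesis using aset_intro[OF bc bcN a(1) fV pac _ ab] by blast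
          next
            case (Old f)
            have fV: "f \<in> V" using D'S Old by simp
            have af: "pcover V le a f" using Old_cover[OF OldS1 a(1) fV] h'(2) Old by simp
            have "(e, f) \<in> Inc V le" using Old_Inc[of e f ?S1 le V] h'(3) \<open>A' = Old e\<close> Old eV fV by simp
            then have "(a, c) \<in> Ndiag V le" using Ndiag_I[OF a(2) ec af] by blast
            with acN show ?thesis by simp
          qed
        qed
      next
        assume N1: "(Old b, Old d) \<in> Ndiag ?S1 ?le1"
        obtain A' D' where h': "pcover ?S1 ?le1 (Old b) (Old d)" "pcover ?S1 ?le1 A' (Old d)" "pcover ?S1 ?le1 (Old b) D'" "(A', D') \<in> Inc ?S1 ?le1"
          using N1 by (rule Ndiag_D)
        have A'S: "A' \<in> ?S1" and D'S: "D' \<in> ?S1" using pcover_in[OF h'(2)] pcover_in[OF h'(3)] by auto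
        show ?thesis
        proof (cases D')
          case (New b' f)
          have bf': "(b', f) \<in> Ndiag V le" using D'S New by simp
          have u: "plt ?S1 ?le1 (Old b') (New b' f) \<and> (\<forall>z\<in>?S1. plt ?S1 ?le1 z (New b' f) \<longrightarrow> ?le1 z (Old b'))"
            using S1_lo[OF refl bf'] .
          have b'S: "Old b' \<in> ?S1" using Ndiag_in[OF bf'] by simp
          have "Old b = Old b'" using bot_unique[OF b'S] u h'(3) New by blast
          then have bf: "(b, f) \<in> Ndiag V le" using bf' by simp
          have bfp: "pcover V le b f" and fV: "f \<in> V" using Ndiag_in[OF bf] by blast+
          have cf: "c \<noteq> f" using bf bcN by blast
          have "(c, f) \<in> Inc V le" using two_upper_inc[OF bc bfp cf] .
          moreover have "plt V le b f" using bfp unfolding pcover_def by blast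
          ultimately show ?thesis using aset_intro[OF bc bcN a(1) fV pac _ ab] bf by blast
        next
          case (Old f)
          have fV: "f \<in> V" using D'S Old by simp
          have bf: "pcover V le b f" using Old_cover[OF OldS1 b(1) fV] h'(3) Old by simp
          show ?thesis
          proof (cases A')
            case (New e d')
            have ed': "(e, d') \<in> Ndiag V le" using A'S New by simp
            have u: "plt ?S1 ?le1 (New e d') (Old d') \<and> (\<forall>z\<in>?S1. plt ?S1 ?le1 (New e d') z \<longrightarrow> ?le1 (Old d') z)"
              using S1_up[OF refl ed'] .
            have d'S: "Old d' \<in> ?S1" using Ndiag_in[OF ed'] by simp
            have "Old d = Old d'" using top_unique[OF d'S] u h'(2) New by blast
            then have ed: "(e, d) \<in> Ndiag V le" using ed' by simp
            have edp: "pcover V le e d" and eV: "e \<in> V" using Ndiag_in[OF ed] by blast+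
            have k: "(e, c) \<in> Ndiag V le \<and> plt V le e c \<and> (b, e) \<in> Inc V le"
              using key_L'[OF fin P d(2) edp ed bdN bc cd bcN] .
            then have "(e, b) \<in> Inc V le" using Inc_sym[of b e V le] by blast
            then show ?thesis using aset_intro[OF bc bcN eV d(1) _ pbd _ cd] k by blast
          next
            case (Old e)
            have eV: "e \<in> V" using A'S Old by simp
            have ed: "pcover V le e d" using Old_cover[OF OldS1 eV d(1)] h'(2) Old by simp
            have "(e, f) \<in> Inc V le" using Old_Inc[of e f ?S1 le V] h'(4) \<open>D' = Old f\<close> Old eV fV by simp
            then have "(b, d) \<in> Ndiag V le" using Ndiag_I[OF d(2) ed bf] by blast
            with bdN show ?thesis by simp
          qed
        qed
      qed
    qed
  qed
  then show "p \<in> (\<lambda>(b, c). (Old (Old b), Old (Old c))) ` (Ndiag V le \<union> Aset V le)"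
    unfolding pBC b(2) c(2) by (rule rev_image_eqI) simp
qed

end
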